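(* Assume the well-posedness and controllability assumptions below. Then the rotated problem $\bar{\mathbb{P}}(x,\theta)$ is recursively feasible (if it is feasible at $(x_k,\theta_k)$, it is feasible at $(x_{k+1},\theta_{k+1})$ for the closed-loop successor state and any $\theta_{k+1}\in\mathcal{C}(\theta_k)$) and it has the same set of minimizers as $\mathbb{P}(x,\theta)$. Let $\tilde\kappa_N$ be the receding horizon control law of $\bar{\mathbb{P}}$ and $\widetilde V_N^\star$ its optimal value. If moreover the strict stochastic dissipativity assumption below holds, then along the closed loop $x_{k+1}=f(x_k,\tilde\kappa_N(x_k,\theta_k),\theta_k)$, $$\mathcal{L}\widetilde V_N^\star(x_k,\theta_k):=\mathbb{E}[\widetilde V_N^\star(x_{k+1},\theta_{k+1})-\widetilde V_N^\star(x_k,\theta_k)\mid\mathfrak{F}_k]\le-\rho(x_k,\theta_k),$$ where $\rho:\mathbb{R}^n\times\mathcal{N}\to\mathbb{R}_+$ is positive definite in its first argument with respect to $x_s$.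
   Context: Setting: $\mathcal{N}=\{1,\dots,\nu\}$; $\{\theta_k\}$ a time-homogeneous Markov chain on $\mathcal{N}$ with transition matrix $P=(p_{ij})$ on a filtered probability space $(\Omega,\mathfrak{F},\{\mathfrak{F}_k\},\mathbb{P})$, $\mathfrak{F}_k$ generated by the history up to time $k$; system $x_{k+1}=f(x_k,u_k,\theta_k)$ ($x_k\in\mathbb{R}^n$, $u_k\in\mathbb{R}^m$, $x_k,\theta_k$ measured at time $k$); constraints $(x_k,u_k)\in Y_{\theta_k}$; stage cost $\ell$. $u\lhd\mathfrak{F}_k$ means $\mathfrak{F}_k$-measurable. Cover $\mathcal{C}(i)=\{j:p_{ij}>0\}$; bet node $\mathrm{bet}(i)\in\mathcal{C}(i)$ maximizing $p_{ij}$ over $j\in\mathcal{C}(i)$. Well-posedness: each $\ell(\cdot,\cdot,\theta)$ nonnegative, lower semicontinuous, level-bounded in $u$ locally uniformly in $x$; $f(\cdot,\cdot,\theta)$ continuous; $Y_\theta$ nonempty compact; chain irreducible and aperiodic. Optimal steady states $(x_s^\theta,u_s^\theta)$ minimize $\ell(x,u,\theta)$ s.t. $f(x,u,\theta)=x$, $(x,u)\in Y_\theta$, with value $\ell_s(\theta)$. Controllability: for all $i,j$ there is $\bar u_s^{i,j}$ with $(x_s^i,\bar u_s^{i,j})\in Y_j$, $f(x_s^i,\bar u_s^{i,j},j)=x_s^{\mathrm{bet}(j)}$. Common optimal equilibrium: there is one optimal steady state $(x_s,u_s)=(0,0)$ common to all modes; $\ell_s$ denotes the corresponding optimal steady-state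 cost (treated as a single value). Strict stochastic dissipativity assumption: in addition to the common optimal equilibrium, there are a function $\lambda:\mathbb{R}^n\times\mathcal{N}\to\mathbb{R}$, lower semicontinuous in its first argument, with $\lambda(x_s,\theta)=\lambda_s$ independent of $\theta$, and a convex $\rho:\mathbb{R}^n\times\mathcal{N}\to\mathbb{R}_+$, positive definite with respect to $x_s$ ($\rho(x_s,\theta)=0$, $\rho(x,\theta)>0$ for $x\ne x_s$), such that for all states, inputs and modes $\mathcal{L}\lambda(x_k,\theta_k)\le \ell(x_k,u_k,\theta_k)-\ell_s-\rho(x_k,\theta_k)$, where $\mathcal{L}\lambda(x_k,\theta_k):=\mathbb{E}[\lambda(x_{k+1},\theta_{k+1})-\lambda(x_k,\theta_k)\mid\mathfrak{F}_k]$ with $x_{k+1}=f(x_k,u_k,\theta_k)$. Rotated stage cost: $L(x_k,u_k,\theta_k):=\ell(x_k,u_k,\theta_k)-\mathcal{L}\lambda(x_k,\theta_k)$. Problem $\mathbb{P}(x,\theta)$: minimize $\mathbb{E}[\sum_{j=0}^{N-1}\ell(x_j,u_j,\theta_j)\mid\mathfrak{F}_0]$ over $(u_0,\dots,u_{N-1})$ subject to $x_{k+1}=f(x_k,u_k,\theta_k)$, $(x_k,u_k)\in Y_{\theta_k}$ ($k=0,\dots,N-1$), $(x_0,\theta_0)=(x,\theta)$, $x_N=x_s^{\mathrm{bet}(\theta_{N-1})}$, $u_k\lhd\mathfrak{F}_k$. Rotated problem $\bar{\mathbb{P}}(x,\theta)$: $\widetilde V_N^\star(x,\theta)=\inf\mathbb{E}[\sum_{j=0}^{N-1}L(x_j,u_j,\theta_j)\mid\mathfrak{F}_0]$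 subject to the same constraints. The receding horizon law is the first element of an optimal policy. *)

theory Defs
  imports "HOL-Analysis.Analysis"
begin

definition lsc :: "('a::topological_space \<Rightarrow> real) \<Rightarrow> bool" where
  "lsc g \<longleftrightarrow> (\<forall>a. closed {z. g z \<le> a})"

definition level_bounded_loc_unif :: "('x::metric_space \<Rightarrow> 'u::metric_space \<Rightarrow> real) \<Rightarrow> bool" where
  "level_bounded_loc_unif g \<longleftrightarrow>
     (\<forall>x0 a. \<exists>V. open V \<and> x0 \<in> V \<and> bounded (\<Union>x\<in>V. {u. g x u \<le> a}))"

fun ptrans :: "('m::finite \<Rightarrow> 'm \<Rightarrow> real) \<Rightarrow> nat \<Rightarrow> 'm \<Rightarrow> 'm \<Rightarrow> real" where
  "ptrans P 0 i j = (if i = j then 1 else 0)"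
| "ptrans P (Suc n) i j = (\<Sum>k\<in>UNIV. ptrans P n i k * P k j)"

definition stochastic :: "('m::finite \<Rightarrow> 'm \<Rightarrow> real) \<Rightarrow> bool" where
  "stochastic P \<longleftrightarrow> (\<forall>i j. 0 \<le> P i j) \<and> (\<forall>i. (\<Sum>j\<in>UNIV. P i j) = 1)"

definition irreducible_chain :: "('m::finite \<Rightarrow> 'm \<Rightarrow> real) \<Rightarrow> bool" where
  "irreducible_chain P \<longleftrightarrow> (\<forall>i j. \<exists>n>0. ptrans P n i j > 0)"

definition aperiodic_chain :: "('m::finite \<Rightarrow> 'm \<Rightarrow> real) \<Rightarrow> bool" where
  "aperiodic_chain P \<longleftrightarrow> (\<forall>i. Gcd {n. n > 0 \<and> ptrans P n i i > 0} = 1)"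

definition cover :: "('m \<Rightarrow> 'm \<Rightarrow> real) \<Rightarrow> 'm \<Rightarrow> 'm set" where
  "cover P i = {j. P i j > 0}"

definition is_bet :: "('m \<Rightarrow> 'm \<Rightarrow> real) \<Rightarrow> ('m \<Rightarrow> 'm) \<Rightarrow> bool" where
  "is_bet P bet \<longleftrightarrow> (\<forall>i. bet i \<in> cover P i \<and> (\<forall>j\<in>cover P i. P i j \<le> P i (bet i)))"

text \<open>A mode history up to time k is stored REVERSED as a list
  [theta_k, ..., theta_1, theta_0] (length k+1). A causal policy
  (u_k measurable w.r.t. F_k) is a function of the history: pi :: 'm list => 'u;
  since x_0 is fixed, the states x_0..x_k are functions of the mode history.\<close>

fun traj :: "('x \<Rightarrow> 'u \<Rightarrow> 'm \<Rightarrow> 'x) \<Rightarrow> 'x \<Rightarrow> ('m list \<Rightarrow> 'u) \<Rightarrow> 'm list \<Rightarrow> 'x" where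
  "traj f x pol (th' # th # h) = f (traj f x pol (th # h)) (pol (th # h)) th"
| "traj f x pol _ = x"

fun pathprob :: "('m \<Rightarrow> 'm \<Rightarrow> real) \<Rightarrow> 'm list \<Rightarrow> real" where
  "pathprob P (th' # th # h) = P th th' * pathprob P (th # h)"
| "pathprob P [th] = 1"
| "pathprob P [] = 0"

definition paths :: "'m \<Rightarrow> nat \<Rightarrow> 'm list set" where
  "paths th k = {h. length h = Suc k \<and> last h = th}"

definition reach :: "('m \<Rightarrow> 'm \<Rightarrow> real) \<Rightarrow> 'm \<Rightarrow> nat \<Rightarrow> 'm list set" where
  "reach P th k = {h \<in> paths th k. pathprob P h > 0}"

definition feasible ::
  "('x \<Rightarrow> 'u \<Rightarrow> 'm \<Rightarrow> 'x) \<Rightarrow> ('m \<Rightarrow> ('x \<times> 'u) set) \<Rightarrow> ('m \<Rightarrow> 'm \<Rightarrow> real) \<Rightarrow>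
   ('m \<Rightarrow> 'm) \<Rightarrow> ('m \<Rightarrow> 'x) \<Rightarrow> nat \<Rightarrow> 'x \<Rightarrow> 'm \<Rightarrow> ('m list \<Rightarrow> 'u) \<Rightarrow> bool" where
  "feasible f Y P bet xs N x th pol \<longleftrightarrow>
     (\<forall>k<N. \<forall>h\<in>reach P th k. (traj f x pol h, pol h) \<in> Y (hd h)) \<and>
     (\<forall>h\<in>reach P th (N - 1). f (traj f x pol h) (pol h) (hd h) = xs (bet (hd h)))"

definition cost ::
  "('x \<Rightarrow> 'u \<Rightarrow> 'm \<Rightarrow> 'x) \<Rightarrow> ('m \<Rightarrow> 'm \<Rightarrow> real) \<Rightarrow> ('x \<Rightarrow> 'u \<Rightarrow> 'm \<Rightarrow> real) \<Rightarrow>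
   nat \<Rightarrow> 'x \<Rightarrow> 'm \<Rightarrow> ('m list \<Rightarrow> 'u) \<Rightarrow> real" where
  "cost f P c N x th pol =
     (\<Sum>k<N. \<Sum>h\<in>paths th k. pathprob P h * c (traj f x pol h) (pol h) (hd h))"

text \<open>Generator: L lambda(x_k,theta_k) = E[lambda(x_{k+1},theta_{k+1}) - lambda(x_k,theta_k) | F_k],
  given the successor state x_{k+1} = xnext.\<close>
definition gen :: "('m::finite \<Rightarrow> 'm \<Rightarrow> real) \<Rightarrow> ('x \<Rightarrow> 'm \<Rightarrow> real) \<Rightarrow> 'x \<Rightarrow> 'x \<Rightarrow> 'm \<Rightarrow> real" where
  "gen P lam x xnext th = (\<Sum>j\<in>UNIV. P th j * lam xnext j) - lam x th"

definition rot_cost ::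
  "('x \<Rightarrow> 'u \<Rightarrow> 'm \<Rightarrow> 'x) \<Rightarrow> ('m::finite \<Rightarrow> 'm \<Rightarrow> real) \<Rightarrow> ('x \<Rightarrow> 'u \<Rightarrow> 'm \<Rightarrow> real) \<Rightarrow>
   ('x \<Rightarrow> 'm \<Rightarrow> real) \<Rightarrow> 'x \<Rightarrow> 'u \<Rightarrow> 'm \<Rightarrow> real" where
  "rot_cost f P l lam x u th = l x u th - gen P lam x (f x u th) th"

definition minimizers ::
  "('x \<Rightarrow> 'u \<Rightarrow> 'm \<Rightarrow> 'x) \<Rightarrow> ('m \<Rightarrow> ('x \<times> 'u) set) \<Rightarrow> ('m \<Rightarrow> 'm \<Rightarrow> real) \<Rightarrow>
   ('m \<Rightarrow> 'm) \<Rightarrow> ('m \<Rightarrow> 'x) \<Rightarrow> ('x \<Rightarrow> 'u \<Rightarrow> 'm \<Rightarrow> real) \<Rightarrow> nat \<Rightarrow> 'x \<Rightarrow> 'm \<Rightarrow>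
   ('m list \<Rightarrow> 'u) set" where
  "minimizers f Y P bet xs c N x th =
     {pol. feasible f Y P bet xs N x th pol \<and>
           (\<forall>pol'. feasible f Y P bet xs N x th pol' \<longrightarrow> cost f P c N x th pol \<le> cost f P c N x th pol')}"

definition optval ::
  "('x \<Rightarrow> 'u \<Rightarrow> 'm \<Rightarrow> 'x) \<Rightarrow> ('m \<Rightarrow> ('x \<times> 'u) set) \<Rightarrow> ('m \<Rightarrow> 'm \<Rightarrow> real) \<Rightarrow>
   ('m \<Rightarrow> 'm) \<Rightarrow> ('m \<Rightarrow> 'x) \<Rightarrow> ('x \<Rightarrow> 'u \<Rightarrow> 'm \<Rightarrow> real) \<Rightarrow> nat \<Rightarrow> 'x \<Rightarrow> 'm \<Rightarrow> real" where
  "optval f Y P bet xs c N x th =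
     Inf {cost f P c N x th pol | pol. feasible f Y P bet xs N x th pol}"

definition opt_steady_state ::
  "('x \<Rightarrow> 'u \<Rightarrow> 'm \<Rightarrow> 'x) \<Rightarrow> ('m \<Rightarrow> ('x \<times> 'u) set) \<Rightarrow> ('x \<Rightarrow> 'u \<Rightarrow> 'm \<Rightarrow> real) \<Rightarrow>
   'm \<Rightarrow> 'x \<Rightarrow> 'u \<Rightarrow> bool" where
  "opt_steady_state f Y l th xs us \<longleftrightarrow>
     f xs us th = xs \<and> (xs, us) \<in> Y th \<and>
     (\<forall>x u. f x u th = x \<and> (x, u) \<in> Y th \<longrightarrow> l xs us th \<le> l x u th)"

end

theory Submission
  imports Defs
begin


lemma paths_finite: "finite (paths (th::'m::finite) k)"
proof -
  have "paths th k \<subseteq> {xs. set xs \<subseteq> UNIV \<and> length xs = Suc k}" by (auto simp: paths_def)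
  moreover have "finite {xs::'m list. set xs \<subseteq> UNIV \<and> length xs = Suc k}"
    by (rule finite_lists_length_eq) simp
  ultimately show ?thesis by (rule finite_subset)
qed

lemma paths_0: "paths th 0 = {[th]}"
  by (auto simp: paths_def length_Suc_conv)

lemma sum_paths_Suc:
  "(\<Sum>h\<in>paths (th::'m::finite) (Suc k). F h) = (\<Sum>h\<in>paths th k. \<Sum>j\<in>UNIV. F (j#h))"
proof -
  have eq: "paths th (Suc k) = (\<lambda>p. fst p # snd p) ` (UNIV \<times> paths th k)"
  proof (rule set_eqI, rule iffI)
    fix h assume "h \<in> paths th (Suc k)"
    then obtain a t where "h = a # t" "length t = Suc k" "last t = th"
      by (auto simp: paths_def length_Suc_conv)
    then show "h \<in> (\<lambda>p. fst p # snd p) ` (UNIV \<times> paths th k)"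
      by (auto simp: paths_def image_iff intro!: exI[of _ "(a,t)"])
  next
    fix h assume "h \<in> (\<lambda>p. fst p # snd p) ` (UNIV \<times> paths th k)"
    then show "h \<in> paths th (Suc k)" by (auto simp: paths_def)
  qed
  have inj: "inj_on (\<lambda>p. fst p # snd p) (UNIV \<times> paths th k)"
    by (auto simp: inj_on_def)
  have "(\<Sum>h\<in>paths th (Suc k). F h) = (\<Sum>p\<in>UNIV \<times> paths th k. F (fst p # snd p))"
    by (simp add: eq sum.reindex[OF inj])
  also have "\<dots> = (\<Sum>j\<in>UNIV. \<Sum>h\<in>paths th k. F (j#h))"
    by (simp add: sum.cartesian_product split_def)
  also have "\<dots> = (\<Sum>h\<in>paths th k. \<Sum>j\<in>UNIV. F (j#h))"
    by (rule sum.swap)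
  finally show ?thesis .
qed

lemma sum_paths_snoc:
  "(\<Sum>h\<in>paths (th::'m::finite) (Suc k). F h) = (\<Sum>j\<in>UNIV. \<Sum>h\<in>paths j k. F (h @ [th]))"
proof -
  have U: "(\<Union>j. paths j k) = {h::'m list. length h = Suc k}"
    by (auto simp: paths_def)
  have "(\<Sum>j\<in>UNIV. \<Sum>h\<in>paths j k. F (h @ [th])) = (\<Sum>h\<in>(\<Union>j. paths j k). F (h @ [th]))"
    by (rule sum.UNION_disjoint[symmetric]) (auto simp: paths_finite[unfolded paths_def] paths_def)
  also have "\<dots> = (\<Sum>h\<in>(\<lambda>h. h @ [th]) ` {h::'m list. length h = Suc k}. F h)"
    unfolding U by (subst sum.reindex) (auto simp: inj_on_def)
  also have "(\<lambda>h. h @ [th]) ` {h::'m list. length h = Suc k} = paths th (Suc k)"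
  proof (rule set_eqI, rule iffI)
    fix h assume "h \<in> paths th (Suc k)"
    then have "h = butlast h @ [th]" "length (butlast h) = Suc k"
      by (auto simp: paths_def) (metis append_butlast_last_id list.size(3) nat.distinct(1))
    then show "h \<in> (\<lambda>h. h @ [th]) ` {h. length h = Suc k}" by blast
  qed (auto simp: paths_def)
  finally show ?thesis by simp
qed

lemma pp_nonneg: "stochastic P \<Longrightarrow> 0 \<le> pathprob P h"
  by (induction P h rule: pathprob.induct) (auto simp: stochastic_def)

lemma pp_snoc: "h \<noteq> [] \<Longrightarrow> pathprob P (h @ [th]) = pathprob P h * P th (last h)"
proof (induction h)
  case (Cons a t)
  note IH = Cons.IH
  show ?case
  proof (cases t)
    case Nil then show ?thesis by simp
  next
    case (Cons b t')
    have "pathprob P (t @ [th]) = pathprob P t * P th (last t)" using IH Cons by simp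
    then show ?thesis using Cons by simp
  qed
qed simp

lemma traj_snoc:
  assumes "\<And>g. length g < length h \<Longrightarrow> g \<noteq> [] \<Longrightarrow> pol' g = pol (g @ [th])" "h \<noteq> []"
  shows "traj f (f x (pol [th]) th) pol' h = traj f x pol (h @ [th])"
  using assms
proof (induction h)
  case (Cons a t)
  note IH = Cons.IH and pr = Cons.prems
  show ?case
  proof (cases t)
    case Nil then show ?thesis by simp
  next
    case (Cons b t')
    have "traj f (f x (pol [th]) th) pol' t = traj f x pol (t @ [th])"
      using pr Cons by (intro IH) auto
    moreover have "pol' t = pol (t @ [th])" using pr Cons by auto
    ultimately show ?thesis using Cons by simp
  qed
qed simp

lemma reach_snoc:
  assumes "h \<in> reach P j k" "P th j > 0"
  shows "h @ [th] \<in> reach P th (Suc k)"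
proof -
  have "h \<noteq> []" "last h = j" using assms(1) by (auto simp: reach_def paths_def)
  then show ?thesis using assms by (auto simp: reach_def paths_def pp_snoc)
qed

lemma reach_tl:
  assumes st: "stochastic P" and g: "g \<in> reach P th (Suc k)"
  shows "tl g \<in> reach P th k"
proof -
  obtain a b t where gg: "g = a # b # t" using g
    by (auto simp: reach_def paths_def length_Suc_conv)
  have pos: "P b a * pathprob P (b # t) > 0" using g gg by (simp add: reach_def)
  have "0 \<le> P b a" using st by (simp add: stochastic_def)
  then have "pathprob P (b # t) > 0" using pos
    by (metis mult_nonneg_nonpos not_le)
  then show ?thesis using g gg by (auto simp: reach_def paths_def)
qed

lemma shift_feasible:
  fixes P :: "'m::finite \<Rightarrow> 'm \<Rightarrow> real"
  assumes st: "stochastic P" and feas: "feasible f Y P bet xs N x th pol" and N: "N > 0"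
    and j: "P th j > 0"
    and cf: "\<forall>h\<in>reach P j (N-1). (xs (bet (hd (tl h @ [th]))), c h) \<in> Y (hd h) \<and>
               f (xs (bet (hd (tl h @ [th])))) (c h) (hd h) = xs (bet (hd h))"
  shows "feasible f Y P bet xs N (f x (pol [th]) th) j
            (\<lambda>h. if length h = N then c h else pol (h @ [th]))"
    and "\<forall>h\<in>reach P j (N-1). traj f (f x (pol[th]) th)
            (\<lambda>h. if length h = N then c h else pol (h @ [th])) h = xs (bet (hd (tl h @ [th])))"
proof -
  define pol' where "pol' = (\<lambda>h. if length h = N then c h else pol (h @ [th]))"
  have tr: "traj f (f x (pol [th]) th) pol' h = traj f x pol (h @ [th])"
    if "length h \<le> N" "h \<noteq> []" for h
    using that by (intro traj_snoc) (auto simp: pol'_def)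
  have last: "traj f (f x (pol[th]) th) pol' h = xs (bet (hd (tl h @ [th])))"
    if h: "h \<in> reach P j (N-1)" for h
  proof -
    have len: "length h = N" "h \<noteq> []" using h N by (auto simp: reach_def paths_def)
    have r1: "h @ [th] \<in> reach P th (Suc (N-1))" using reach_snoc[OF h j] .
    have r2: "tl h @ [th] \<in> reach P th (N-1)"
      using reach_tl[OF st r1] len by simp
    have eqh: "h @ [th] = hd h # (tl h @ [th])" using len by simp
    have "traj f (f x (pol[th]) th) pol' h = traj f x pol (h @ [th])" using tr len by simp
    also have "\<dots> = f (traj f x pol (tl h @ [th])) (pol (tl h @ [th])) (hd (tl h @ [th]))"
      by (subst eqh, cases "tl h") auto
    also have "\<dots> = xs (bet (hd (tl h @ [th])))"
      using feas r2 by (auto simp: feasible_def)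
    finally show ?thesis .
  qed
  have F: "feasible f Y P bet xs N (f x (pol [th]) th) j pol'"
    unfolding feasible_def
  proof (intro conjI ballI allI impI)
    fix k h assume k: "k < N" and h: "h \<in> reach P j k"
    show "(traj f (f x (pol [th]) th) pol' h, pol' h) \<in> Y (hd h)"
    proof (cases "k = N - 1")
      case True
      then have "h \<in> reach P j (N-1)" "length h = N" using h N by (auto simp: reach_def paths_def)
      then show ?thesis using last cf by (auto simp: pol'_def)
    next
      case False
      then have len: "length h < N" "h \<noteq> []" using h k by (auto simp: reach_def paths_def)
      have r1: "h @ [th] \<in> reach P th (Suc k)" using reach_snoc[OF h j] .
      have "Suc k < N" using False k by simp
      then have "(traj f x pol (h @ [th]), pol (h @ [th])) \<in> Y (hd (h @ [th]))"
        using feas r1 by (auto simp: feasible_def)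
      then show ?thesis using len tr[of h] by (auto simp: pol'_def)
    qed
  next
    fix h assume h: "h \<in> reach P j (N - 1)"
    then have "length h = N" using N by (auto simp: reach_def paths_def)
    then show "f (traj f (f x (pol [th]) th) pol' h) (pol' h) (hd h) = xs (bet (hd h))"
      using last[OF h] cf h by (auto simp: pol'_def)
  qed
  then show "feasible f Y P bet xs N (f x (pol [th]) th) j
            (\<lambda>h. if length h = N then c h else pol (h @ [th]))" by (simp add: pol'_def)
  show "\<forall>h\<in>reach P j (N-1). traj f (f x (pol[th]) th)
            (\<lambda>h. if length h = N then c h else pol (h @ [th])) h = xs (bet (hd (tl h @ [th])))"
    using last by (simp add: pol'_def)
qed

lemma pp_cons: "h \<noteq> [] \<Longrightarrow> pathprob P (j # h) = P (hd h) j * pathprob P h"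
  by (cases h) auto

lemma traj_cons: "h \<noteq> [] \<Longrightarrow> traj f x pol (j # h) = f (traj f x pol h) (pol h) (hd h)"
  by (cases h) auto

lemma paths_ne: "h \<in> paths th k \<Longrightarrow> h \<noteq> []"
  by (auto simp: paths_def)

lemma gen_step:
  fixes P :: "'m::finite \<Rightarrow> 'm \<Rightarrow> real"
  shows "(\<Sum>h\<in>paths th k. pathprob P h * gen P lam (traj f x pol h) (f (traj f x pol h) (pol h) (hd h)) (hd h))
   = (\<Sum>h\<in>paths th (Suc k). pathprob P h * lam (traj f x pol h) (hd h))
     - (\<Sum>h\<in>paths th k. pathprob P h * lam (traj f x pol h) (hd h))"
proof -
  have "(\<Sum>h\<in>paths th (Suc k). pathprob P h * lam (traj f x pol h) (hd h))
     = (\<Sum>h\<in>paths th k. \<Sum>j\<in>UNIV. pathprob P (j#h) * lam (traj f x pol (j#h)) j)"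
    by (simp add: sum_paths_Suc)
  also have "\<dots> = (\<Sum>h\<in>paths th k. pathprob P h * (\<Sum>j\<in>UNIV. P (hd h) j * lam (f (traj f x pol h) (pol h) (hd h)) j))"
    by (rule sum.cong[OF refl]) (auto simp: pp_cons traj_cons paths_ne sum_distrib_left mult_ac)
  finally show ?thesis
    by (simp add: gen_def right_diff_distrib sum_subtractf)
qed

lemma cost_diff:
  fixes P :: "'m::finite \<Rightarrow> 'm \<Rightarrow> real"
  assumes st: "stochastic P" and feas: "feasible f Y P bet xs N x th pol" and N: "N > 0"
  shows "cost f P l N x th pol - cost f P (rot_cost f P l lam) N x th pol
     = (\<Sum>h\<in>paths th (N-1). pathprob P h * (\<Sum>j\<in>UNIV. P (hd h) j * lam (xs (bet (hd h))) j)) - lam x th"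
proof -
  define Phi where "Phi k = (\<Sum>h\<in>paths th k. pathprob P h * lam (traj f x pol h) (hd h))" for k
  have "cost f P l N x th pol - cost f P (rot_cost f P l lam) N x th pol
      = (\<Sum>k<N. Phi (Suc k) - Phi k)"
    unfolding cost_def rot_cost_def Phi_def
    by (simp add: gen_step[symmetric] sum_subtractf[symmetric] right_diff_distrib)
  also have "\<dots> = Phi N - Phi 0" by (rule sum_lessThan_telescope)
  also have "Phi 0 = lam x th" by (simp add: Phi_def paths_0)
  also have "Phi N = (\<Sum>h\<in>paths th (N-1). pathprob P h * (\<Sum>j\<in>UNIV. P (hd h) j * lam (xs (bet (hd h))) j))"
  proof -
    have NN: "N = Suc (N-1)" using N by simp
    have "Phi N = (\<Sum>h\<in>paths th (N-1). \<Sum>j\<in>UNIV. pathprob P (j#h) * lam (traj f x pol (j#h)) j)"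
      unfolding Phi_def by (subst NN) (simp add: sum_paths_Suc)
    also have "\<dots> = (\<Sum>h\<in>paths th (N-1). pathprob P h * (\<Sum>j\<in>UNIV. P (hd h) j * lam (xs (bet (hd h))) j))"
    proof (rule sum.cong[OF refl])
      fix h assume h: "h \<in> paths th (N-1)"
      show "(\<Sum>j\<in>UNIV. pathprob P (j#h) * lam (traj f x pol (j#h)) j)
          = pathprob P h * (\<Sum>j\<in>UNIV. P (hd h) j * lam (xs (bet (hd h))) j)"
      proof (cases "pathprob P h > 0")
        case True
        then have "h \<in> reach P th (N-1)" using h by (simp add: reach_def)
        then have "f (traj f x pol h) (pol h) (hd h) = xs (bet (hd h))"
          using feas by (auto simp: feasible_def)
        then show ?thesis using h
          by (auto simp: pp_cons traj_cons paths_ne sum_distrib_left mult_ac)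
      next
        case False
        then have "pathprob P h = 0" using pp_nonneg[OF st, of h] by simp
        then show ?thesis using h by (auto simp: pp_cons paths_ne)
      qed
    qed
    finally show ?thesis .
  qed
  finally show ?thesis .
qed

lemma minimizers_eq:
  fixes P :: "'m::finite \<Rightarrow> 'm \<Rightarrow> real"
  assumes st: "stochastic P" and N: "N > 0"
  shows "minimizers f Y P bet xs (rot_cost f P l lam) N x th = minimizers f Y P bet xs l N x th"
proof -
  define C where "C = (\<Sum>h\<in>paths th (N-1). pathprob P h * (\<Sum>j\<in>UNIV. P (hd h) j * lam (xs (bet (hd h))) j)) - lam x th"
  have d: "cost f P (rot_cost f P l lam) N x th p = cost f P l N x th p - C"
    if "feasible f Y P bet xs N x th p" for p
    using cost_diff[OF st that N, of l lam] by (simp add: C_def)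
  show ?thesis unfolding minimizers_def
    using d by auto
qed

lemma sum_pp:
  fixes P :: "'m::finite \<Rightarrow> 'm \<Rightarrow> real"
  assumes st: "stochastic P"
  shows "(\<Sum>h\<in>paths th k. pathprob P h) = 1"
proof (induction k)
  case 0 then show ?case by (simp add: paths_0)
next
  case (Suc k)
  have "(\<Sum>h\<in>paths th (Suc k). pathprob P h) = (\<Sum>h\<in>paths th k. \<Sum>j\<in>UNIV. pathprob P (j#h))"
    by (simp add: sum_paths_Suc)
  also have "\<dots> = (\<Sum>h\<in>paths th k. pathprob P h * (\<Sum>j\<in>UNIV. P (hd h) j))"
    by (rule sum.cong[OF refl]) (auto simp: pp_cons paths_ne sum_distrib_left mult_ac)
  also have "\<dots> = (\<Sum>h\<in>paths th k. pathprob P h)"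
    using st by (simp add: stochastic_def)
  finally show ?case using Suc by simp
qed

lemma cost_nonneg:
  fixes P :: "'m::finite \<Rightarrow> 'm \<Rightarrow> real"
  assumes st: "stochastic P" and c: "\<forall>x u t. 0 \<le> c x u t"
  shows "0 \<le> cost f P c N x th p"
  unfolding cost_def using c pp_nonneg[OF st]
  by (intro sum_nonneg mult_nonneg_nonneg) auto

lemma decrease:
  fixes P :: "'m::finite \<Rightarrow> 'm \<Rightarrow> real"
  assumes st: "stochastic P" and N: "N > 0"
    and ss_opt: "\<forall>th. opt_steady_state f Y l th (xs th) (us th)"
    and z: "\<forall>th. xs th = 0 \<and> us th = 0 \<and> l 0 0 th = ls"
    and lam0: "\<forall>th th'. lam 0 th = lam 0 th'"
    and rho0: "\<forall>x th. 0 \<le> rho x th"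
    and l_nonneg: "\<forall>x u th. 0 \<le> l x u th"
    and diss: "\<forall>x u th. gen P lam x (f x u th) th \<le> l x u th - ls - rho x th"
    and pm: "pol \<in> minimizers f Y P bet xs (rot_cost f P l lam) N x th"
  shows "(\<Sum>j\<in>UNIV. P th j * optval f Y P bet xs (rot_cost f P l lam) N (f x (pol [th]) th) j)
            - optval f Y P bet xs (rot_cost f P l lam) N x th \<le> - rho x th"
proof -
  let ?L = "rot_cost f P l lam"
  define M where "M = N - 1"
  have NM: "N = Suc M" using N by (simp add: M_def)
  define x' where "x' = f x (pol [th]) th"
  define pol' where "pol' = (\<lambda>h::'m list. if length h = N then us (hd h) else pol (h @ [th]))"
  have feas: "feasible f Y P bet xs N x th pol" using pm by (simp add: minimizers_def)
  have ls0: "0 \<le> ls" using z l_nonneg by metis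
  have Lge: "ls + rho a c \<le> ?L a b c" for a b c
    using diss[rule_format, of a b c] by (simp add: rot_cost_def)
  have Lnn: "\<forall>a b c. 0 \<le> ?L a b c" using Lge ls0 rho0 by (meson add_nonneg_nonneg order_trans)
  have Y00: "(0, 0) \<in> Y t" and f00: "f 0 0 t = 0" for t
    using ss_opt z by (auto simp: opt_steady_state_def)
  have L00: "?L 0 0 t = ls" for t
  proof -
    have "(\<Sum>j\<in>UNIV. P t j * lam 0 j) = (\<Sum>j\<in>UNIV. P t j * lam 0 t)"
      using lam0 by (metis)
    also have "\<dots> = lam 0 t" using st by (simp add: stochastic_def sum_distrib_right[symmetric])
    finally show ?thesis using z by (simp add: rot_cost_def gen_def f00)
  qed
  have cf: "\<forall>h\<in>reach P j (N-1). (xs (bet (hd (tl h @ [th]))), us (hd h)) \<in> Y (hd h) \<and>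
               f (xs (bet (hd (tl h @ [th])))) (us (hd h)) (hd h) = xs (bet (hd h))" for j
    using z Y00 f00 by simp
  have feas': "feasible f Y P bet xs N x' j pol'" if "P th j > 0" for j
    using shift_feasible(1)[OF st feas N that cf] by (simp add: x'_def pol'_def)
  have last': "\<forall>h\<in>reach P j (N-1). traj f x' pol' h = 0" if "P th j > 0" for j
    using shift_feasible(2)[OF st feas N that cf] z by (simp add: x'_def pol'_def)
  define S where "S k = (\<Sum>h\<in>paths th k. pathprob P h * ?L (traj f x pol h) (pol h) (hd h))" for k
  define S' where "S' (j::'m) k = (\<Sum>h\<in>paths j k. pathprob P h * ?L (traj f x' pol' h) (pol' h) (hd h))" for j k
  have costS: "cost f P ?L N x th pol = S 0 + (\<Sum>k<M. S (Suc k))"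
    unfolding cost_def S_def NM by (rule sum.lessThan_Suc_shift)
  have costS': "cost f P ?L N x' j pol' = (\<Sum>k<M. S' j k) + S' j M" for j
    unfolding cost_def S'_def NM by simp
  have S0: "S 0 = ?L x (pol [th]) th" by (simp add: S_def paths_0)
  have SS: "S (Suc k) = (\<Sum>j\<in>UNIV. P th j * S' j k)" if k: "k < M" for k
  proof -
    have "S (Suc k) = (\<Sum>j\<in>UNIV. \<Sum>h\<in>paths j k. pathprob P (h @ [th]) *
              ?L (traj f x pol (h @ [th])) (pol (h @ [th])) (hd (h @ [th])))"
      unfolding S_def by (rule sum_paths_snoc)
    also have "\<dots> = (\<Sum>j\<in>UNIV. P th j * S' j k)"
      unfolding S'_def sum_distrib_left
    proof (intro sum.cong refl)
      fix j :: 'm and h assume h: "h \<in> paths j k"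
      then have hh: "h \<noteq> []" "last h = j" "length h = Suc k" by (auto simp: paths_def)
      then have "length h < N" using k NM by simp
      then have "traj f x' pol' h = traj f x pol (h @ [th])" "pol' h = pol (h @ [th])"
        unfolding x'_def using hh by (auto simp: pol'_def intro!: traj_snoc)
      then show "pathprob P (h @ [th]) * ?L (traj f x pol (h @ [th])) (pol (h @ [th])) (hd (h @ [th]))
          = P th j * (pathprob P h * ?L (traj f x' pol' h) (pol' h) (hd h))"
        using hh by (simp add: pp_snoc)
    qed
    finally show ?thesis .
  qed
  have SM: "P th j * S' j M = P th j * ls" for j
  proof (cases "P th j > 0")
    case True
    have "S' j M = (\<Sum>h\<in>paths j M. pathprob P h * ls)"
      unfolding S'_def
    proof (rule sum.cong[OF refl])
      fix h assume h: "h \<in> paths j M"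
      show "pathprob P h * ?L (traj f x' pol' h) (pol' h) (hd h) = pathprob P h * ls"
      proof (cases "pathprob P h > 0")
        case True
        then have r: "h \<in> reach P j (N-1)" using h by (simp add: reach_def M_def)
        then have "length h = N" using N by (auto simp: reach_def paths_def)
        then have "pol' h = 0" using z by (simp add: pol'_def)
        then show ?thesis using last'[OF \<open>P th j > 0\<close>] r L00 by simp
      next
        case False
        then show ?thesis using pp_nonneg[OF st, of h] by simp
      qed
    qed
    also have "\<dots> = ls" using sum_pp[OF st] by (simp add: sum_distrib_right[symmetric])
    finally show ?thesis by simp
  next
    case False
    then have "P th j = 0" using st unfolding stochastic_def by (metis less_eq_real_def)
    then show ?thesis by simp
  qed
  have V: "optval f Y P bet xs ?L N x th = cost f P ?L N x th pol"
    unfolding optval_def using pm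
    by (intro cInf_eq_minimum) (auto simp: minimizers_def)
  have V': "P th j * optval f Y P bet xs ?L N x' j \<le> P th j * cost f P ?L N x' j pol'" for j
  proof (cases "P th j > 0")
    case True
    have "optval f Y P bet xs ?L N x' j \<le> cost f P ?L N x' j pol'"
      unfolding optval_def
      by (rule cInf_lower) (use feas'[OF True] cost_nonneg[OF st Lnn] in \<open>auto intro!: bdd_belowI[of _ 0]\<close>)
    then show ?thesis using True by simp
  next
    case False
    then have "P th j = 0" using st unfolding stochastic_def by (metis less_eq_real_def)
    then show ?thesis by simp
  qed
  have "(\<Sum>j\<in>UNIV. P th j * optval f Y P bet xs ?L N x' j)
        \<le> (\<Sum>j\<in>UNIV. P th j * cost f P ?L N x' j pol')"
    by (rule sum_mono) (rule V')
  also have "\<dots> = (\<Sum>k<M. \<Sum>j\<in>UNIV. P th j * S' j k) + (\<Sum>j\<in>UNIV. P th j * S' j M)"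
    by (simp add: costS' distrib_left sum.distrib sum_distrib_left sum.swap[of _ "{..<M}"])
  also have "(\<Sum>k<M. \<Sum>j\<in>UNIV. P th j * S' j k) = (\<Sum>k<M. S (Suc k))"
    by (rule sum.cong[OF refl]) (simp add: SS)
  also have "(\<Sum>j\<in>UNIV. P th j * S' j M) = ls"
    using st by (simp add: SM sum_distrib_right[symmetric] stochastic_def)
  finally have "(\<Sum>j\<in>UNIV. P th j * optval f Y P bet xs ?L N x' j)
        \<le> cost f P ?L N x th pol - ?L x (pol [th]) th + ls"
    using costS S0 by simp
  then show ?thesis using V Lge[where a=x and b="pol [th]" and c=th] unfolding x'_def by simp
qed


theorem lemma2:
  fixes f :: "'x::euclidean_space \<Rightarrow> 'u::euclidean_space \<Rightarrow> 'm::finite \<Rightarrow> 'x"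
    and l :: "'x \<Rightarrow> 'u \<Rightarrow> 'm \<Rightarrow> real"
    and Y :: "'m \<Rightarrow> ('x \<times> 'u) set"
    and P :: "'m \<Rightarrow> 'm \<Rightarrow> real"
    and bet :: "'m \<Rightarrow> 'm"
    and xs :: "'m \<Rightarrow> 'x" and us :: "'m \<Rightarrow> 'u"
    and lam :: "'x \<Rightarrow> 'm \<Rightarrow> real" and rho :: "'x \<Rightarrow> 'm \<Rightarrow> real" and ls :: real
    and N :: nat
  assumes N_pos: "N > 0"
    (* well-posedness *)
    and l_nonneg: "\<forall>x u th. 0 \<le> l x u th"
    and l_lsc: "\<forall>th. lsc (\<lambda>(x, u). l x u th)"
    and l_lvlbdd: "\<forall>th. level_bounded_loc_unif (\<lambda>x u. l x u th)"
    and f_cont: "\<forall>th. continuous_on UNIV (\<lambda>(x, u). f x u th)"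
    and Y_cpt: "\<forall>th. compact (Y th) \<and> Y th \<noteq> {}"
    and P_stoch: "stochastic P"
    and P_irred: "irreducible_chain P"
    and P_aper: "aperiodic_chain P"
    and bet_def: "is_bet P bet"
    and ss_opt: "\<forall>th. opt_steady_state f Y l th (xs th) (us th)"
    (* controllability *)
    and ctrl: "\<forall>i j. \<exists>u. (xs i, u) \<in> Y j \<and> f (xs i) u j = xs (bet j)"
  shows
    \<comment> \<open>recursive feasibility of the rotated problem along the closed loop\<close>
    "(\<forall>x th pol. pol \<in> minimizers f Y P bet xs (rot_cost f P l lam) N x th \<longrightarrow>
        (\<forall>j\<in>cover P th. \<exists>pol'. feasible f Y P bet xs N (f x (pol [th]) th) j pol'))
     \<and>
     \<comment> \<open>same minimizers as the original problem\<close>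
     (\<forall>x th. minimizers f Y P bet xs (rot_cost f P l lam) N x th
             = minimizers f Y P bet xs l N x th)
     \<and>
     \<comment> \<open>under strict stochastic dissipativity: decrease of the rotated value function\<close>
     ((\<forall>th. xs th = 0 \<and> us th = 0 \<and> l 0 0 th = ls) \<and>
      (\<forall>th. lsc (\<lambda>x. lam x th)) \<and> (\<forall>th th'. lam 0 th = lam 0 th') \<and>
      (\<forall>th. convex_on UNIV (\<lambda>x. rho x th)) \<and>
      (\<forall>x th. 0 \<le> rho x th) \<and> (\<forall>th. rho 0 th = 0) \<and> (\<forall>x th. x \<noteq> 0 \<longrightarrow> rho x th > 0) \<and>
      (\<forall>x u th. gen P lam x (f x u th) th \<le> l x u th - ls - rho x th)
      \<longrightarrow>
      (\<forall>x th pol. pol \<in> minimizers f Y P bet xs (rot_cost f P l lam) N x th \<longrightarrow>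
          (\<Sum>j\<in>UNIV. P th j * optval f Y P bet xs (rot_cost f P l lam) N (f x (pol [th]) th) j)
            - optval f Y P bet xs (rot_cost f P l lam) N x th \<le> - rho x th))"
proof (intro conjI impI allI)
  fix x th pol assume pm: "pol \<in> minimizers f Y P bet xs (rot_cost f P l lam) N x th"
  have feas: "feasible f Y P bet xs N x th pol" using pm by (simp add: minimizers_def)
  show "\<forall>j\<in>cover P th. \<exists>pol'. feasible f Y P bet xs N (f x (pol [th]) th) j pol'"
  proof
    fix j assume "j \<in> cover P th"
    then have j: "P th j > 0" by (simp add: cover_def)
    define c where "c = (\<lambda>h. SOME u. (xs (bet (hd (tl h @ [th]))), u) \<in> Y (hd h) \<and>
               f (xs (bet (hd (tl h @ [th])))) u (hd h) = xs (bet (hd h)))"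
    have cf: "\<forall>h\<in>reach P j (N-1). (xs (bet (hd (tl h @ [th]))), c h) \<in> Y (hd h) \<and>
               f (xs (bet (hd (tl h @ [th])))) (c h) (hd h) = xs (bet (hd h))"
    proof
      fix h
      show "(xs (bet (hd (tl h @ [th]))), c h) \<in> Y (hd h) \<and>
               f (xs (bet (hd (tl h @ [th])))) (c h) (hd h) = xs (bet (hd h))"
        unfolding c_def by (rule someI_ex) (use ctrl in blast)
    qed
    show "\<exists>pol'. feasible f Y P bet xs N (f x (pol [th]) th) j pol'"
      using shift_feasible(1)[OF P_stoch feas N_pos j cf] by blast
  qed
next
  fix x th
  show "minimizers f Y P bet xs (rot_cost f P l lam) N x th = minimizers f Y P bet xs l N x th"
    by (rule minimizers_eq[OF P_stoch N_pos])
next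
  fix x th pol
  assume H: "(\<forall>th. xs th = 0 \<and> us th = 0 \<and> l 0 0 th = ls) \<and>
      (\<forall>th. lsc (\<lambda>x. lam x th)) \<and> (\<forall>th th'. lam 0 th = lam 0 th') \<and>
      (\<forall>th. convex_on UNIV (\<lambda>x. rho x th)) \<and>
      (\<forall>x th. 0 \<le> rho x th) \<and> (\<forall>th. rho 0 th = 0) \<and> (\<forall>x th. x \<noteq> 0 \<longrightarrow> rho x th > 0) \<and>
      (\<forall>x u th. gen P lam x (f x u th) th \<le> l x u th - ls - rho x th)"
    and pm: "pol \<in> minimizers f Y P bet xs (rot_cost f P l lam) N x th"
  show "(\<Sum>j\<in>UNIV. P th j * optval f Y P bet xs (rot_cost f P l lam) N (f x (pol [th]) th) j)
            - optval f Y P bet xs (rot_cost f P l lam) N x th \<le> - rho x th"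
    using H by (intro decrease[OF P_stoch N_pos ss_opt _ _ _ l_nonneg _ pm]) auto
qed

end
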